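(* Let $(\alpha_1,\alpha_2)$ be a good pair with canonical representation $(x,y,z)$. Then $x\ge\frac{1+2\sqrt7}{9}=1-2\tau$.
   Context: $\tau=\frac{4-\sqrt7}{9}$. A pair $(\alpha_1,\alpha_2)\in[0,1]^2$ is a good pair if $\max\{\frac14,\frac{\alpha_1+\sqrt{2\alpha_1-1}}{2}\}\le\alpha_2$ and $\max\{\alpha_2,1-\alpha_2,\frac{1+\tau^2}{2}\}\le\alpha_1$, and in addition the unique $(x,y,z)\in[0,1]^3$ with $x+y+z=1$, $x\ge\frac12$, $\alpha_1=x^2+y^2$, $\alpha_2=x^2+z^2$ satisfies $2x^2+z^2\ge1$; this $(x,y,z)$ is the canonical representation. *)

theory Defs
  imports Complex_Main
begin

definition tau :: real where
  "tau = (4 - sqrt 7) / 9"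

definition is_rep :: "real \<Rightarrow> real \<Rightarrow> real \<times> real \<times> real \<Rightarrow> bool" where
  "is_rep a1 a2 t = (case t of (x, y, z) \<Rightarrow>
      x \<in> {0..1} \<and> y \<in> {0..1} \<and> z \<in> {0..1} \<and> x + y + z = 1 \<and> x \<ge> 1/2 \<and>
      a1 = x^2 + y^2 \<and> a2 = x^2 + z^2)"

definition canonical_rep :: "real \<Rightarrow> real \<Rightarrow> real \<times> real \<times> real" where
  "canonical_rep a1 a2 = (THE t. is_rep a1 a2 t)"

definition good_pair :: "real \<Rightarrow> real \<Rightarrow> bool" where
  "good_pair a1 a2 \<longleftrightarrow>
     a1 \<in> {0..1} \<and> a2 \<in> {0..1} \<and>
     max (1/4) ((a1 + sqrt (2*a1 - 1)) / 2) \<le> a2 \<and>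
     max (max a2 (1 - a2)) ((1 + tau^2) / 2) \<le> a1 \<and>
     (\<exists>!t. is_rep a1 a2 t) \<and>
     (case canonical_rep a1 a2 of (x, y, z) \<Rightarrow> 2*x^2 + z^2 \<ge> 1)"

end

theory Submission
  imports Defs
begin

lemma key: fixes x y z t :: real
  assumes "x+y+z=1" "y\<ge>0" "z\<ge>0" "x \<ge> 1/2" "2*x^2+z^2\<ge>1" "2*x^2+2*y^2 \<ge> 1+t^2"
 "9*t^2-8*t+1=0" "t > 0.14" "t < 0.16" shows "x \<ge> 1-2*t"
proof (rule ccontr)
  assume "\<not> ?thesis" hence xl: "x < 1-2*t" by simp
  have e: "2*(1-2*t)^2 + t^2 = 1" using assms(7) by (simp add: power2_eq_square algebra_simps)
  have "x^2 < (1-2*t)^2" using xl assms(4) by (intro power_strict_mono) auto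
  hence "z^2 > t^2" using e assms(5) by linarith
  hence zt: "z > t" using assms(3) assms(8) by (smt (verit) power_mono)
  define d where "d = 1-2*t-x"
  define e1 where "e1 = y - t"
  have "e1 < d" using zt assms(1) unfolding d_def e1_def by linarith
  have "x^2+y^2 \<ge> (1-2*t)^2 + t^2" using e assms(6) by linarith
  hence h: "d^2 - 2*(1-2*t)*d + 2*t*e1 + e1^2 \<ge> 0" unfolding d_def e1_def
    by (simp add: power2_eq_square algebra_simps)
  have "d>0" "d \<le> 1/2 - 2*t" using xl assms(4) unfolding d_def by auto
  have "e1 \<ge> - t" using assms(2) unfolding e1_def by simp
  have "(d-e1)*(d+e1+2*t) > 0" using \<open>e1<d\<close> \<open>e1 \<ge> -t\<close> \<open>d>0\<close> assms(8) by (intro mult_pos_pos) auto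
  have "d * (d - (1-3*t)) < 0" using \<open>d>0\<close> \<open>d \<le> 1/2 - 2*t\<close> assms(9) by (intro mult_pos_neg) auto
  thus False using h \<open>(d-e1)*(d+e1+2*t) > 0\<close> by (simp add: power2_eq_square algebra_simps)
qed

lemma sq7: "sqrt 7 > (2.6::real)" "sqrt 7 < (2.65::real)" "(sqrt 7)^2 = (7::real)"
proof -
  show "sqrt 7 > (2.6::real)" by (rule real_less_rsqrt) (simp add: power2_eq_square)
  show "sqrt 7 < (2.65::real)" 
  proof -
    have "sqrt 7 < sqrt ((2.65::real)^2)" by (subst real_sqrt_less_iff) (simp add: power2_eq_square)
    thus ?thesis by simp
  qed
  show "(sqrt 7)^2 = (7::real)" by simp
qed

theorem mainTheorem8:
  fixes a1 a2 x y z :: real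
  assumes "good_pair a1 a2"
    and "canonical_rep a1 a2 = (x, y, z)"
  shows "x \<ge> (1 + 2 * sqrt 7) / 9 \<and> (1 + 2 * sqrt 7) / 9 = 1 - 2 * tau"
proof -
  have ex: "\<exists>!t. is_rep a1 a2 t" and c: "2*x^2+z^2 \<ge> 1"
    and b: "(1 + tau^2) / 2 \<le> a1"
    using assms unfolding good_pair_def by auto
  have "is_rep a1 a2 (canonical_rep a1 a2)" unfolding canonical_rep_def by (rule theI'[OF ex])
  hence r: "x+y+z=1" "y\<ge>0" "z\<ge>0" "x\<ge>1/2" "a1 = x^2+y^2" using assms(2) unfolding is_rep_def by auto
  have eq: "9*tau^2-8*tau+1=0" unfolding tau_def using sq7(3) by (simp add: power_divide power2_diff field_simps)
  have t1: "tau > 0.14" "tau < 0.16" unfolding tau_def using sq7 by auto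
  have "x \<ge> 1 - 2*tau" by (rule key[OF r(1-4) c _ eq t1]) (use b r(5) in \<open>simp add: field_simps\<close>)
  moreover have "(1 + 2 * sqrt 7) / 9 = 1 - 2 * tau" unfolding tau_def by (simp add: field_simps)
  ultimately show ?thesis by simp
qed

end
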